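(* Let $n\ge 1$, let $A\in \mathrm{M}_n(E_0)$ and $B\in \mathrm{M}_n(E_1)$. Let \[p_A(x)=\det(xI_n-A)=\alpha_0+\alpha_1x+\cdots+\alpha_{n-1}x^{n-1}+\alpha_nx^n\in E_0[x]\] be the characteristic polynomial of $A$ (so $\alpha_n=1$). Define elements $\beta_0,\dots,\beta_n\in E_1$ by $\beta_n=0$ and, descending for $k=n-1,n-2,\dots,0$, \[\beta_k=\Big\{-\frac{1}{n-k}\sum_{i=1}^{n-k}\beta_{k+i}\,\mathrm{tr}(A^i)\Big\}+\Big\{-\frac{1}{n-k}\sum_{\substack{r+s\le n-k-1\\ r,s\ge 0}}\alpha_{k+r+s+1}\,\mathrm{tr}(A^rBA^s)\Big\}.\] Then \[\beta_0I_n+\sum_{k=1}^{n}\Big\{\beta_kA^k+\alpha_k\big(A^{k-1}B+A^{k-2}BA+\cdots+ABA^{k-2}+BA^{k-1}\big)\Big\}=0,\] where $I_n$ is the $n\times n$ identity matrix.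
   Context: $K$ is a field of characteristic zero. $E$ is the infinite-dimensional Grassmann (exterior) algebra over $K$, generated by countably many indeterminates $v_1,v_2,\dots$ subject to $v_iv_j+v_jv_i=0$ for all $i,j$ (so $v_i^2=0$). $E=E_0\oplus E_1$ is its natural $\mathbb{Z}_2$-grading: $E_0$ (resp. $E_1$) is the $K$-span of products of an even (resp. odd) number of generators; $E_0$ is commutative and central in $E$. $\mathrm{M}_n(R)$ denotes the algebra of $n\times n$ matrices over $R$. For a matrix $M$ over $E$, $\mathrm{tr}(M)$ is the sum of its diagonal entries. Since $E_0$ is commutative, $\det(xI_n-A)$ for $A\in\mathrm{M}_n(E_0)$ is the usual determinant over the commutative ring $E_0[x]$. $A^0=I_n$. *)

theory Defs
  imports Main "HOL-Library.Function_Algebras" "HOL-Combinatorics.Permutations"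
begin

text \<open>The infinite Grassmann algebra E over a field K (type 'k, char 0), in its standard
  basis description: an element is a K-linear combination of the monomials
  v_{i1} v_{i2} ... v_{im} with i1 < ... < im, i.e. a finitely supported function from
  finite sets of indices to K.
  The product of basis monomials is v_T v_U = 0 if T, U meet, and otherwise
  (-1)^(number of pairs t in T, u in U with u < t) times v_(T union U).\<close>

type_synonym 'k grass = "nat set \<Rightarrow> 'k"

definition gsign :: "nat set \<Rightarrow> nat set \<Rightarrow> 'k::comm_ring_1" where
  "gsign T U = (-1) ^ card {(t, u). t \<in> T \<and> u \<in> U \<and> u < t}"

definition gmul :: "'k::comm_ring_1 grass \<Rightarrow> 'k grass \<Rightarrow> 'k grass" where
  "gmul f g = (\<lambda>S. if finite S then (\<Sum>T\<in>Pow S. gsign T (S - T) * f T * g (S - T)) else 0)"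

definition gone :: "'k::comm_ring_1 grass" where
  "gone = (\<lambda>S. if S = {} then 1 else 0)"

definition gen :: "nat \<Rightarrow> 'k::comm_ring_1 grass" where
  "gen i = (\<lambda>S. if S = {i} then 1 else 0)"

definition gscale :: "'k::comm_ring_1 \<Rightarrow> 'k grass \<Rightarrow> 'k grass" where
  "gscale c f = (\<lambda>S. c * f S)"

definition Grass :: "'k::comm_ring_1 grass set" where
  "Grass = {f. finite {S. f S \<noteq> 0} \<and> (\<forall>S. f S \<noteq> 0 \<longrightarrow> finite S)}"

definition Grass0 :: "'k::comm_ring_1 grass set" where
  "Grass0 = {f \<in> Grass. \<forall>S. f S \<noteq> 0 \<longrightarrow> even (card S)}"

definition Grass1 :: "'k::comm_ring_1 grass set" where
  "Grass1 = {f \<in> Grass. \<forall>S. f S \<noteq> 0 \<longrightarrow> odd (card S)}"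

text \<open>n x n matrices over E, represented as functions nat => nat => E;
  only the entries with indices < n are meaningful.\<close>
type_synonym 'k gmat = "nat \<Rightarrow> nat \<Rightarrow> 'k grass"

definition mmul :: "nat \<Rightarrow> 'k::comm_ring_1 gmat \<Rightarrow> 'k gmat \<Rightarrow> 'k gmat" where
  "mmul n M N = (\<lambda>i j. \<Sum>l<n. gmul (M i l) (N l j))"

definition mone :: "'k::comm_ring_1 gmat" where
  "mone = (\<lambda>i j. if i = j then gone else 0)"

primrec mpow :: "nat \<Rightarrow> 'k::comm_ring_1 gmat \<Rightarrow> nat \<Rightarrow> 'k gmat" where
  "mpow n M 0 = mone"
| "mpow n M (Suc k) = mmul n (mpow n M k) M"

definition mtrace :: "nat \<Rightarrow> 'k::comm_ring_1 gmat \<Rightarrow> 'k grass" where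
  "mtrace n M = (\<Sum>i<n. M i i)"

definition msmul :: "'k::comm_ring_1 grass \<Rightarrow> 'k gmat \<Rightarrow> 'k gmat" where
  "msmul c M = (\<lambda>i j. gmul c (M i j))"

text \<open>Polynomials in x over E_0, as coefficient sequences (coefficient of x^k at k).\<close>
type_synonym 'k gpoly = "nat \<Rightarrow> 'k grass"

definition pmul :: "'k::comm_ring_1 gpoly \<Rightarrow> 'k gpoly \<Rightarrow> 'k gpoly" where
  "pmul p q = (\<lambda>k. \<Sum>j\<le>k. gmul (p j) (q (k - j)))"

definition pone :: "'k::comm_ring_1 gpoly" where
  "pone = (\<lambda>k. if k = 0 then gone else 0)"

definition xIminus :: "'k::comm_ring_1 gmat \<Rightarrow> nat \<Rightarrow> nat \<Rightarrow> 'k gpoly" where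
  "xIminus A i j = (\<lambda>k. if k = 0 then - A i j else if k = 1 then (if i = j then gone else 0) else 0)"

text \<open>characteristic polynomial det(x I_n - A), by the Leibniz formula (meaningful for A over
  the commutative ring E_0); charpoly n A k is the coefficient alpha_k of x^k.\<close>
definition charpoly :: "nat \<Rightarrow> 'k::comm_ring_1 gmat \<Rightarrow> 'k gpoly" where
  "charpoly n A = (\<Sum>\<sigma>\<in>{\<sigma>. \<sigma> permutes {..<n}}.
      (\<lambda>k. gscale (of_int (sign \<sigma>))
              (foldr (\<lambda>i acc. pmul (xIminus A i (\<sigma> i)) acc) [0..<n] pone k)))"

end

theory Submission
  imports Defs "Jordan_Normal_Form.Char_Poly"
begin

definition gfin :: "'k::comm_ring_1 grass \<Rightarrow> bool" where
  "gfin f \<longleftrightarrow> (\<forall>S. f S \<noteq> 0 \<longrightarrow> finite S)"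

definition evn :: "'k::comm_ring_1 grass \<Rightarrow> bool" where
  "evn f \<longleftrightarrow> (\<forall>S. f S \<noteq> 0 \<longrightarrow> finite S \<and> even (card S))"

definition ginv :: "nat set \<Rightarrow> nat set \<Rightarrow> (nat \<times> nat) set" where
  "ginv T U = {(t, u). t \<in> T \<and> u \<in> U \<and> u < t}"

lemma gsign_ginv: "gsign T U = (-1) ^ card (ginv T U)"
  unfolding gsign_def ginv_def by simp

lemma finite_ginv: "finite T \<Longrightarrow> finite U \<Longrightarrow> finite (ginv T U)"
  by (rule finite_subset[of _ "T \<times> U"]) (auto simp: ginv_def)

lemma ginv_Un_left: "T \<inter> V = {} \<Longrightarrow> ginv (T \<union> V) W = ginv T W \<union> ginv V W"
  by (auto simp: ginv_def)
lemma ginv_Un_right: "V \<inter> W = {} \<Longrightarrow> ginv T (V \<union> W) = ginv T V \<union> ginv T W"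
  by (auto simp: ginv_def)

lemma gsign_Un_left:
  assumes "finite T" "finite V" "finite W" "T \<inter> V = {}"
  shows "(gsign (T \<union> V) W :: 'k::comm_ring_1) = gsign T W * gsign V W"
proof -
  have "card (ginv (T \<union> V) W) = card (ginv T W) + card (ginv V W)"
    unfolding ginv_Un_left[OF assms(4)]
    by (rule card_Un_disjoint) (use assms in \<open>auto simp: finite_ginv[unfolded ginv_def] ginv_def\<close>)
  thus ?thesis by (simp add: gsign_ginv power_add)
qed

lemma gsign_Un_right:
  assumes "finite T" "finite V" "finite W" "V \<inter> W = {}"
  shows "(gsign T (V \<union> W) :: 'k::comm_ring_1) = gsign T V * gsign T W"
proof -
  have "card (ginv T (V \<union> W)) = card (ginv T V) + card (ginv T W)"
    unfolding ginv_Un_right[OF assms(4)]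
    by (rule card_Un_disjoint) (use assms in \<open>auto simp: finite_ginv[unfolded ginv_def] ginv_def\<close>)
  thus ?thesis by (simp add: gsign_ginv power_add)
qed

lemma gsign_sq: "(gsign T U :: 'k::comm_ring_1) * gsign T U = 1"
  by (simp add: gsign_def power_mult_distrib[symmetric] flip: power_add)

lemma gsign_swap:
  assumes "finite T" "finite U" "T \<inter> U = {}"
  shows "(gsign T U :: 'k::comm_ring_1) * gsign U T = (-1) ^ (card T * card U)"
proof -
  have "ginv T U \<union> prod.swap ` ginv U T = T \<times> U"
    using assms(3) by (auto simp: ginv_def image_iff)
  moreover have "ginv T U \<inter> prod.swap ` ginv U T = {}" by (auto simp: ginv_def)
  ultimately have "card (ginv T U) + card (prod.swap ` ginv U T) = card T * card U"
    using assms by (metis card_Un_disjoint card_cartesian_product finite_ginv finite_imageI)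
  moreover have "card (prod.swap ` ginv U T) = card (ginv U T)"
    by (rule card_image) (auto simp: inj_on_def)
  ultimately show ?thesis by (simp add: gsign_ginv power_add[symmetric])
qed

lemma gsign_assoc:
  assumes "finite T" "finite V" "finite W" "T \<inter> V = {}" "T \<inter> W = {}" "V \<inter> W = {}"
  shows "(gsign T V :: 'k::comm_ring_1) * gsign (T \<union> V) W = gsign V W * gsign T (V \<union> W)"
  using assms by (simp add: gsign_Un_left gsign_Un_right ac_simps)

lemma gmul_fin: "finite S \<Longrightarrow> gmul f g S = (\<Sum>T\<in>Pow S. gsign T (S - T) * f T * g (S - T))"
  by (simp add: gmul_def)
lemma gmul_inf: "\<not> finite S \<Longrightarrow> gmul f g S = 0"
  by (simp add: gmul_def)

lemma gmul_assoc: fixes f g h :: "'k::comm_ring_1 grass" shows "gmul (gmul f g) h = gmul f (gmul g h)"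
proof
  fix S :: "nat set"
  show "gmul (gmul f g) h S = gmul f (gmul g h) S"
  proof (cases "finite S")
    case False thus ?thesis by (simp add: gmul_inf)
  next
    case fin: True
    have L: "gmul (gmul f g) h S = (\<Sum>(U,T)\<in>(SIGMA U:Pow S. Pow U).
       gsign U (S - U) * gsign T (U - T) * f T * g (U - T) * h (S - U))"
    proof -
      have "gmul (gmul f g) h S = (\<Sum>U\<in>Pow S. \<Sum>T\<in>Pow U.
         gsign U (S - U) * gsign T (U - T) * f T * g (U - T) * h (S - U))"
        unfolding gmul_fin[OF fin]
      proof (rule sum.cong[OF refl])
        fix U assume "U \<in> Pow S"
        hence fU: "finite U" using fin finite_subset by blast
        show "gsign U (S - U) * gmul f g U * h (S - U) =
          (\<Sum>T\<in>Pow U. gsign U (S - U) * gsign T (U - T) * f T * g (U - T) * h (S - U))"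
          by (simp add: gmul_fin[OF fU] sum_distrib_left sum_distrib_right mult.assoc)
      qed
      also have "\<dots> = (\<Sum>(U,T)\<in>(SIGMA U:Pow S. Pow U).
         gsign U (S - U) * gsign T (U - T) * f T * g (U - T) * h (S - U))"
        by (rule sum.Sigma) (simp add: fin, meson PowD fin finite_Pow_iff rev_finite_subset)
      finally show ?thesis .
    qed
    have R: "gmul f (gmul g h) S = (\<Sum>(T,V)\<in>(SIGMA T:Pow S. Pow (S - T)).
       gsign T (S - T) * gsign V (S - T - V) * f T * g V * h (S - T - V))"
    proof -
      have "gmul f (gmul g h) S = (\<Sum>T\<in>Pow S. \<Sum>V\<in>Pow (S - T).
         gsign T (S - T) * gsign V (S - T - V) * f T * g V * h (S - T - V))"
        unfolding gmul_fin[OF fin]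
      proof (rule sum.cong[OF refl])
        fix T assume "T \<in> Pow S"
        have fU: "finite (S - T)" using fin by auto
        show "gsign T (S - T) * f T * gmul g h (S - T) =
          (\<Sum>V\<in>Pow (S - T). gsign T (S - T) * gsign V (S - T - V) * f T * g V * h (S - T - V))"
          unfolding gmul_fin[OF fU] sum_distrib_left sum_distrib_right
          by (rule sum.cong[OF refl]) (simp only: mult.assoc mult.left_commute[of "f T" "gsign _ _"])
      qed
      also have "\<dots> = (\<Sum>(T,V)\<in>(SIGMA T:Pow S. Pow (S - T)).
         gsign T (S - T) * gsign V (S - T - V) * f T * g V * h (S - T - V))"
        by (rule sum.Sigma) (simp_all add: fin)
      finally show ?thesis .
    qed
    show ?thesis unfolding L R
    proof (rule sum.reindex_bij_witness[where i = "\<lambda>(T,V). (T \<union> V, T)" and j = "\<lambda>(U,T). (T, U - T)"])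
      fix a assume "a \<in> (SIGMA U:Pow S. Pow U)"
      thus "(\<lambda>(T, V). (T \<union> V, T)) ((\<lambda>(U, T). (T, U - T)) a) = a"
        by (cases a) (simp add: Un_absorb1)
    next
      fix a assume "a \<in> (SIGMA U:Pow S. Pow U)"
      thus "(\<lambda>(U, T). (T, U - T)) a \<in> (SIGMA T:Pow S. Pow (S - T))" by (cases a) auto
    next
      fix b assume "b \<in> (SIGMA T:Pow S. Pow (S - T))"
      thus "(\<lambda>(U, T). (T, U - T)) ((\<lambda>(T, V). (T \<union> V, T)) b) = b" by (cases b) auto
    next
      fix b assume "b \<in> (SIGMA T:Pow S. Pow (S - T))"
      thus "(\<lambda>(T, V). (T \<union> V, T)) b \<in> (SIGMA U:Pow S. Pow U)" by (cases b) auto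
    next
      fix a assume a: "a \<in> (SIGMA U:Pow S. Pow U)"
      obtain U T where aUT: "a = (U, T)" by (cases a)
      with a have TU: "T \<subseteq> U" "U \<subseteq> S" by auto
      let ?V = "U - T" and ?W = "S - U"
      have fins: "finite T" "finite ?V" "finite ?W"
        using rev_finite_subset[OF fin] TU by auto
      have e1: "T \<union> ?V = U" "?V \<union> ?W = S - T" "S - T - ?V = ?W" using TU by auto
      have sg: "(gsign T ?V :: 'k) * gsign (T \<union> ?V) ?W = gsign ?V ?W * gsign T (?V \<union> ?W)"
        by (rule gsign_assoc[OF fins]) (use TU in auto)
      show "(case (\<lambda>(U, T). (T, U - T)) a of (T, V) \<Rightarrow>
          gsign T (S - T) * gsign V (S - T - V) * f T * g V * h (S - T - V)) =
        (case a of (U, T) \<Rightarrow> gsign U (S - U) * gsign T (U - T) * f T * g (U - T) * h (S - U))"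
      proof -
        have k: "(gsign T (S - T) :: 'k) * gsign ?V ?W = gsign U ?W * gsign T ?V"
          using sg e1 by (simp add: mult.commute)
        have "gsign T (S - T) * gsign ?V ?W * f T * g ?V * h ?W
            = (gsign T (S - T) * gsign ?V ?W) * (f T * g ?V * h ?W)" by (simp add: mult.assoc)
        also have "\<dots> = gsign U ?W * gsign T ?V * f T * g ?V * h ?W" unfolding k by (simp add: mult.assoc)
        finally show ?thesis unfolding aUT by (simp only: e1(3) prod.case)
      qed
    qed
  qed
qed

lemma gsign_sym_even:
  assumes "finite T" "finite U" "T \<inter> U = {}" "even (card T)"
  shows "(gsign U T :: 'k::comm_ring_1) = gsign T U"
proof -
  have "(gsign T U :: 'k) * gsign U T = 1" using gsign_swap[OF assms(1-3)] assms(4) by simp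
  hence "(gsign T U :: 'k) * (gsign T U * gsign U T) = gsign T U" by simp
  thus ?thesis by (simp add: mult.assoc[symmetric] gsign_sq)
qed

lemma gmul_comm_even:
  fixes f g :: "'k::comm_ring_1 grass"
  assumes ev: "evn f" shows "gmul f g = gmul g f"
proof
  fix S :: "nat set"
  show "gmul f g S = gmul g f S"
  proof (cases "finite S")
    case False thus ?thesis by (simp add: gmul_inf)
  next
    case fin: True
    show ?thesis unfolding gmul_fin[OF fin]
    proof (rule sum.reindex_bij_witness[where i = "\<lambda>T. S - T" and j = "\<lambda>T. S - T"])
      fix T assume T: "T \<in> Pow S"
      show "gsign (S - T) (S - (S - T)) * g (S - T) * f (S - (S - T)) = gsign T (S - T) * f T * g (S - T)"
      proof (cases "f T = 0")
        case True thus ?thesis using T by (simp add: double_diff)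
      next
        case False
        with ev have "even (card T)" by (auto simp: evn_def)
        moreover have "finite T" "finite (S - T)" using T fin rev_finite_subset by auto
        ultimately have "(gsign (S - T) T :: 'k) = gsign T (S - T)"
          by (intro gsign_sym_even) auto
        thus ?thesis using T by (simp add: double_diff ac_simps)
      qed
    qed auto
  qed
qed

lemma gmul_add_left: "gmul (f + g) h = gmul f h + gmul (g::'k::comm_ring_1 grass) h"
  by (rule ext) (simp add: gmul_def algebra_simps sum.distrib)
lemma gmul_add_right: "gmul h (f + g) = gmul h f + gmul (h::'k::comm_ring_1 grass) g"
  by (rule ext) (simp add: gmul_def algebra_simps sum.distrib)
lemma gmul_zero_left[simp]: "gmul 0 (h::'k::comm_ring_1 grass) = 0"
  by (rule ext) (simp add: gmul_def)
lemma gmul_zero_right[simp]: "gmul (h::'k::comm_ring_1 grass) 0 = 0"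
  by (rule ext) (simp add: gmul_def)
lemma gmul_minus_left: "gmul (- f) h = - gmul f (h::'k::comm_ring_1 grass)"
  by (rule ext) (simp add: gmul_def sum_negf)
lemma gmul_minus_right: "gmul h (- f) = - gmul h (f::'k::comm_ring_1 grass)"
  by (rule ext) (simp add: gmul_def sum_negf)
lemma gmul_diff_left: "gmul (f - g) h = gmul f h - gmul (g::'k::comm_ring_1 grass) h"
  by (rule ext) (simp add: gmul_def algebra_simps sum_subtractf)
lemma gmul_diff_right: "gmul h (f - g) = gmul h f - gmul (h::'k::comm_ring_1 grass) g"
  by (rule ext) (simp add: gmul_def algebra_simps sum_subtractf)
lemma gmul_sum_left: "gmul (\<Sum>i\<in>I. f i) h = (\<Sum>i\<in>I. gmul (f i) (h::'k::comm_ring_1 grass))"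
  proof (induct I rule: infinite_finite_induct)
  case (infinite A) thus ?case by (metis sum.infinite gmul_zero_left)
next
  case empty thus ?case by (simp only: sum.empty gmul_zero_left)
next
  case (insert x F) thus ?case by (simp only: sum.insert[OF insert(1,2)] gmul_add_left insert(3))
qed
lemma gmul_sum_right: "gmul h (\<Sum>i\<in>I. f i) = (\<Sum>i\<in>I. gmul (h::'k::comm_ring_1 grass) (f i))"
  proof (induct I rule: infinite_finite_induct)
  case (infinite A) thus ?case by (metis sum.infinite gmul_zero_right)
next
  case empty thus ?case by (simp only: sum.empty gmul_zero_right)
next
  case (insert x F) thus ?case by (simp only: sum.insert[OF insert(1,2)] gmul_add_right insert(3))
qed
lemma gmul_gscale_left: "gmul (gscale c f) h = gscale c (gmul f (h::'k::comm_ring_1 grass))"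
  by (rule ext) (simp add: gmul_def gscale_def sum_distrib_left ac_simps)
lemma gmul_gscale_right: "gmul h (gscale c f) = gscale c (gmul h (f::'k::comm_ring_1 grass))"
  by (rule ext) (simp add: gmul_def gscale_def sum_distrib_left ac_simps)

lemma gone_even: "evn (gone :: 'k::comm_ring_1 grass)"
  by (simp add: evn_def gone_def)

lemma gmul_gone_left: "gfin f \<Longrightarrow> gmul gone f = (f::'k::comm_ring_1 grass)"
proof (rule ext)
  fix S assume gf: "gfin f"
  show "gmul gone f S = f S"
  proof (cases "finite S")
    case False thus ?thesis using gf by (auto simp: gmul_inf gfin_def)
  next
    case True
    have "gmul gone f S = (\<Sum>T\<in>Pow S. if T = {} then gsign T (S - T) * f (S - T) else 0)"
      unfolding gmul_fin[OF True] by (rule sum.cong) (auto simp: gone_def)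
    also have "\<dots> = gsign {} S * f S" by (simp add: sum.delta[OF finite_Pow_iff[THEN iffD2, OF True]])
    finally show ?thesis by (simp add: gsign_def)
  qed
qed

lemma gmul_gone_right: "gfin f \<Longrightarrow> gmul f gone = (f::'k::comm_ring_1 grass)"
proof (rule ext)
  fix S assume gf: "gfin f"
  show "gmul f gone S = f S"
  proof (cases "finite S")
    case False thus ?thesis using gf by (auto simp: gmul_inf gfin_def)
  next
    case True
    have "gmul f gone S = (\<Sum>T\<in>Pow S. if T = S then gsign T (S - T) * f T else 0)"
      unfolding gmul_fin[OF True] by (rule sum.cong) (auto simp: gone_def)
    also have "\<dots> = gsign S {} * f S" by (simp add: sum.delta sum.delta' True)
    finally show ?thesis by (simp add: gsign_def)
  qed
qed

lemma gfin_gmul: "gfin (gmul f g)"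
  by (simp add: gfin_def gmul_def)

lemma even_gfin: "evn f \<Longrightarrow> gfin f" by (auto simp: evn_def gfin_def)

lemma evn_gmul:
  fixes f g :: "'k::comm_ring_1 grass"
  assumes "evn f" "evn g" shows "evn (gmul f g)"
  unfolding evn_def
proof (intro allI impI)
  fix S assume ne: "gmul f g S \<noteq> 0"
  hence fin: "finite S" using gmul_inf by metis
  from ne obtain T where "T \<in> Pow S" "gsign T (S - T) * f T * g (S - T) \<noteq> 0"
    unfolding gmul_fin[OF fin] by (rule sum.not_neutral_contains_not_neutral)
  hence T: "T \<subseteq> S" "f T \<noteq> 0" "g (S - T) \<noteq> 0" by auto
  have "even (card T)" "even (card (S - T))" using T assms by (auto simp: evn_def)
  moreover have "card S = card T + card (S - T)"
    using card_Diff_subset[OF rev_finite_subset[OF fin T(1)] T(1)] card_mono[OF fin T(1)] by simp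
  ultimately show "finite S \<and> even (card S)" using fin by simp
qed

lemma evn_0[simp]: "evn 0" by (simp add: evn_def)
lemma evn_add: "evn f \<Longrightarrow> evn g \<Longrightarrow> evn (f + g)"
  unfolding evn_def plus_fun_apply
proof (intro allI impI)
  fix S assume a: "\<forall>S. f S \<noteq> 0 \<longrightarrow> finite S \<and> even (card S)" "\<forall>S. g S \<noteq> 0 \<longrightarrow> finite S \<and> even (card S)"
    and "f S + g S \<noteq> 0"
  hence "f S \<noteq> 0 \<or> g S \<noteq> 0" by auto
  with a show "finite S \<and> even (card S)" by blast
qed
lemma evn_uminus: "evn f \<Longrightarrow> evn (- f)" by (simp add: evn_def)
lemma evn_diff: "evn f \<Longrightarrow> evn g \<Longrightarrow> evn (f - g)"
  unfolding evn_def
proof (intro allI impI)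
  fix S assume a: "\<forall>S. f S \<noteq> 0 \<longrightarrow> finite S \<and> even (card S)" "\<forall>S. g S \<noteq> 0 \<longrightarrow> finite S \<and> even (card S)"
    and "(f - g) S \<noteq> 0"
  hence "f S \<noteq> 0 \<or> g S \<noteq> 0" by auto
  with a show "finite S \<and> even (card S)" by blast
qed
lemma evn_gscale: "evn f \<Longrightarrow> evn (gscale c f)"
  unfolding evn_def gscale_def
proof (intro allI impI)
  fix S assume a: "\<forall>S. f S \<noteq> 0 \<longrightarrow> finite S \<and> even (card S)" and "c * f S \<noteq> 0"
  hence "f S \<noteq> 0" by auto
  with a show "finite S \<and> even (card S)" by blast
qed

lemma evn_sum: "(\<And>i. i \<in> I \<Longrightarrow> evn (f i)) \<Longrightarrow> evn (\<Sum>i\<in>I. f i)"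
  by (induct I rule: infinite_finite_induct) (auto intro: evn_add)

lemma gfin_0[simp]: "gfin 0" by (simp add: gfin_def)
lemma gfin_add: "gfin f \<Longrightarrow> gfin g \<Longrightarrow> gfin (f + g)"
  unfolding gfin_def plus_fun_apply
proof (intro allI impI)
  fix S assume a: "\<forall>S. f S \<noteq> 0 \<longrightarrow> finite S" "\<forall>S. g S \<noteq> 0 \<longrightarrow> finite S"
    and "f S + g S \<noteq> 0"
  hence "f S \<noteq> 0 \<or> g S \<noteq> 0" by auto
  with a show "finite S" by blast
qed
lemma gfin_uminus: "gfin f \<Longrightarrow> gfin (- f)" by (simp add: gfin_def)
lemma gfin_diff: "gfin f \<Longrightarrow> gfin g \<Longrightarrow> gfin (f - g)"
  unfolding gfin_def
proof (intro allI impI)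
  fix S assume a: "\<forall>S. f S \<noteq> 0 \<longrightarrow> finite S" "\<forall>S. g S \<noteq> 0 \<longrightarrow> finite S"
    and "(f - g) S \<noteq> 0"
  hence "f S \<noteq> 0 \<or> g S \<noteq> 0" by auto
  with a show "finite S" by blast
qed
lemma gfin_gscale: "gfin f \<Longrightarrow> gfin (gscale c f)"
  unfolding gfin_def gscale_def
proof (intro allI impI)
  fix S assume a: "\<forall>S. f S \<noteq> 0 \<longrightarrow> finite S" and "c * f S \<noteq> 0"
  hence "f S \<noteq> 0" by auto
  with a show "finite S" by blast
qed
lemma gfin_sum: "(\<And>i. i \<in> I \<Longrightarrow> gfin (f i)) \<Longrightarrow> gfin (\<Sum>i\<in>I. f i)"
  by (induct I rule: infinite_finite_induct) (auto intro: gfin_add)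


typedef (overloaded) ('k::comm_ring_1) dn = "{(r::'k grass, m::'k grass). evn r \<and> gfin m}"
  morphisms rep_dn Abs_dn
  by (rule exI[of _ "(0,0)"]) simp

definition dr :: "'k::comm_ring_1 dn \<Rightarrow> 'k grass" where "dr x = fst (rep_dn x)"
definition dm :: "'k::comm_ring_1 dn \<Rightarrow> 'k grass" where "dm x = snd (rep_dn x)"
definition mkdn :: "'k::comm_ring_1 grass \<Rightarrow> 'k grass \<Rightarrow> 'k dn" where "mkdn r m = Abs_dn (r, m)"

lemma dr_evn: "evn (dr x)" and dm_gfin: "gfin (dm x)"
  using rep_dn[of x] by (auto simp: dr_def dm_def)

lemma dr_gfin: "gfin (dr x)" using dr_evn even_gfin by blast

lemma dn_eq_iff: "x = y \<longleftrightarrow> dr x = dr y \<and> dm x = dm y"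
  by (metis dm_def dr_def prod.expand rep_dn_inject)

lemma dr_mkdn[simp]: "evn r \<Longrightarrow> gfin m \<Longrightarrow> dr (mkdn r m) = r"
  and dm_mkdn[simp]: "evn r \<Longrightarrow> gfin m \<Longrightarrow> dm (mkdn r m) = m"
  by (simp_all add: dr_def dm_def mkdn_def Abs_dn_inverse)

instantiation dn :: (comm_ring_1) comm_ring_1
begin
definition "0 = mkdn 0 0"
definition "1 = mkdn gone 0"
definition "x + y = mkdn (dr x + dr y) (dm x + dm y)"
definition "- x = mkdn (- dr x) (- dm x)"
definition "x - y = mkdn (dr x - dr y) (dm x - dm y)"
definition "x * y = mkdn (gmul (dr x) (dr y)) (gmul (dr x) (dm y) + gmul (dr y) (dm x))"

lemma dr_zero[simp]: "dr (0::'a dn) = 0" and dm_zero[simp]: "dm (0::'a dn) = 0"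
  by (simp_all add: zero_dn_def)
lemma dr_one[simp]: "dr (1::'a dn) = gone" and dm_one[simp]: "dm (1::'a dn) = 0"
  by (simp_all add: one_dn_def gone_even)
lemma dr_add[simp]: "dr (x + y) = dr x + dr y" and dm_add[simp]: "dm (x + y) = dm x + dm y"
  by (simp_all add: plus_dn_def evn_add gfin_add dr_evn dm_gfin)
lemma dr_uminus[simp]: "dr (- x) = - dr x" and dm_uminus[simp]: "dm (- x) = - dm x"
  by (simp_all add: uminus_dn_def evn_uminus gfin_uminus dr_evn dm_gfin)
lemma dr_diff[simp]: "dr (x - y) = dr x - dr y" and dm_diff[simp]: "dm (x - y) = dm x - dm y"
  by (simp_all add: minus_dn_def evn_diff gfin_diff dr_evn dm_gfin)
lemma dr_mult[simp]: "dr (x * y) = gmul (dr x) (dr y)"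
  and dm_mult[simp]: "dm (x * y) = gmul (dr x) (dm y) + gmul (dr y) (dm x)"
  by (simp_all add: times_dn_def evn_gmul gfin_add gfin_gmul dr_evn dm_gfin)

instance
proof
  fix a b c :: "'a dn"
  show "a * b * c = a * (b * c)"
  proof -
    have sw: "gmul (dr c) (gmul (dr a) (dm b)) = gmul (dr a) (gmul (dr c) (dm b))"
      by (simp only: gmul_assoc[symmetric] gmul_comm_even[OF dr_evn[of c], of "dr a"])
    have sw2: "gmul (dr c) (gmul (dr b) (dm a)) = gmul (gmul (dr b) (dr c)) (dm a)"
      by (simp only: gmul_assoc[symmetric] gmul_comm_even[OF dr_evn[of c], of "dr b"])
    have "dm (a * b * c) = gmul (gmul (dr a) (dr b)) (dm c) + gmul (dr c) (gmul (dr a) (dm b))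
        + gmul (dr c) (gmul (dr b) (dm a))"
      by (simp only: dm_mult dr_mult gmul_add_right add.assoc)
    also have "\<dots> = gmul (dr a) (gmul (dr b) (dm c)) + gmul (dr a) (gmul (dr c) (dm b))
        + gmul (gmul (dr b) (dr c)) (dm a)" by (simp only: sw sw2 gmul_assoc)
    also have "\<dots> = dm (a * (b * c))"
      by (simp only: dm_mult dr_mult gmul_add_right add.assoc)
    finally show ?thesis unfolding dn_eq_iff by (simp only: dr_mult gmul_assoc)
  qed
  show "a * b = b * a" unfolding dn_eq_iff
    by (simp only: dr_mult dm_mult gmul_comm_even[OF dr_evn[of a], of "dr b"] add.commute)
  show "1 * a = a" unfolding dn_eq_iff by (simp add: gmul_gone_left dr_gfin dm_gfin)
  show "a + b + c = a + (b + c)" unfolding dn_eq_iff by (simp add: add.assoc)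
  show "a + b = b + a" unfolding dn_eq_iff by (simp add: add.commute)
  show "0 + a = a" unfolding dn_eq_iff by simp
  show "- a + a = 0" unfolding dn_eq_iff by simp
  show "a - b = a + - b" unfolding dn_eq_iff by simp
  show "(a + b) * c = a * c + b * c" unfolding dn_eq_iff
    by (simp only: dr_add dm_add dr_mult dm_mult gmul_add_left gmul_add_right add_ac)
  show "(0::'a dn) \<noteq> 1" unfolding dn_eq_iff
  proof
    assume "dr (0::'a dn) = dr 1 \<and> dm (0::'a dn) = dm 1"
    hence "(0::'a grass) {} = gone {}" by simp
    thus False by (simp add: gone_def)
  qed
qed
end


function dpoly :: "('a :: comm_ring_1) poly \<Rightarrow> 'a poly"
  where "dpoly (pCons a p) = (if p = 0 then 0 else p + pCons 0 (dpoly p))"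
  by (auto intro: pCons_cases)
termination dpoly
  by (relation "measure degree") simp_all
declare dpoly.simps[simp del]

lemma dpoly_0 [simp]: "dpoly 0 = 0"
  using dpoly.simps [of 0 0] by simp
lemma dpoly_pCons: "dpoly (pCons a p) = p + pCons 0 (dpoly p)"
  by (simp add: dpoly.simps)
lemma coeff_dpoly: "coeff (dpoly p) n = of_nat (Suc n) * coeff p (Suc n)"
  by (induct p arbitrary: n)
    (auto simp add: dpoly_pCons coeff_pCons algebra_simps split: nat.split)
lemma dpoly_add: "dpoly (p + q) = dpoly p + dpoly q"
  by (rule poly_eqI) (simp add: coeff_dpoly algebra_simps)
lemma dpoly_smult: "dpoly (Polynomial.smult a p) = Polynomial.smult a (dpoly p)"
  by (rule poly_eqI) (simp add: coeff_dpoly algebra_simps)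
lemma dpoly_mult: "dpoly (p * q) = p * dpoly q + q * dpoly p"
  by (induct p) (auto simp: dpoly_add dpoly_smult dpoly_pCons algebra_simps)
lemma dpoly_1[simp]: "dpoly 1 = 0"
  by (simp add: one_pCons dpoly_pCons)
lemma dpoly_sum: "dpoly (sum f A) = (\<Sum>a\<in>A. dpoly (f a))"
  by (induct A rule: infinite_finite_induct) (auto simp: dpoly_add)
lemma dpoly_prod: "dpoly (prod f (as)) = (\<Sum>a\<in>as. prod f (as - {a}) * dpoly (f a))"
proof (induct as rule: infinite_finite_induct)
  case (insert a as)
  then have id: "prod f (insert a as) = f a * prod f as"
    "\<And>g. sum g (insert a as) = g a + sum g as"
    "insert a as - {a} = as"
    by auto
  have "prod f (insert a as - {b}) = f a * prod f (as - {b})" if "b \<in> as" for b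
  proof -
    from \<open>a \<notin> as\<close> that have *: "insert a as - {b} = insert a (as - {b})"
      by auto
    show ?thesis
      unfolding * by (subst prod.insert) (use insert in auto)
  qed
  then show ?case
    unfolding id dpoly_mult insert(3) sum_distrib_left
    by (auto simp add: ac_simps intro!: sum.cong)
qed (auto simp: dpoly_pCons)

lemma dpoly_const: "dpoly [:a:] = 0" by (simp add: dpoly_pCons)
lemma dpoly_of_int: "dpoly (of_int z) = 0"
  by (rule poly_eqI) (simp add: coeff_dpoly of_int_poly)

lemma dpoly_char_poly: fixes A :: "'a :: comm_ring_1 mat" 
  assumes A: "A \<in> carrier_mat n n" 
  shows "dpoly (char_poly A) = (\<Sum>i < n. char_poly (mat_delete A i i))"
proof -
  let ?det = Determinant.det
  let ?m = "map_mat (\<lambda>a. [:- a:])" 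
  let ?lam = "[:0, 1:] \<cdot>\<^sub>m 1\<^sub>m n :: 'a poly mat" 
  from A have id: "dim_row A = n" by auto  

  define mA where "mA = ?m A"
  define lam where "lam = ?lam" 
  let ?sum = "lam + mA" 
  define Sum where "Sum = ?sum" 
  have mA: "mA \<in> carrier_mat n n" and 
    lam: "lam \<in> carrier_mat n n" and
    Sum: "Sum \<in> carrier_mat n n" 
    using A unfolding mA_def Sum_def lam_def by auto
  let ?P = "{p. p permutes {0..<n}}" 
  let ?e = "\<lambda> p. (\<Prod>i = 0..<n. Sum $$ (i, p i))" 
  let ?f = "\<lambda> p a. signof p * (\<Prod>i\<in>{0..<n} - {a}. Sum $$ (i, p i)) * dpoly (Sum $$ (a, p a))" 
  let ?g = "\<lambda> p a. signof p * (\<Prod>i\<in>{0..<n} - {a}. Sum $$ (i, p i))" 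
  define f where "f = ?f" 
  define g where "g = ?g" 
  {
    fix p
    assume p: "p permutes {0 ..< n}" 
    have "dpoly (signof p :: 'a poly) = 0"
      by (rule dpoly_of_int)
    hence "dpoly (signof p * ?e p) = signof p * dpoly (\<Prod>i = 0..<n. Sum $$ (i, p i))" 
      unfolding dpoly_mult by auto
    also have "signof p * dpoly (\<Prod>i = 0..<n. Sum $$ (i, p i)) = 
       (\<Sum>a = 0..<n. f p a)" 
      unfolding dpoly_prod sum_distrib_left f_def by (simp add: ac_simps)
    also note calculation
  } note to_f = this
  {
    fix a
    assume a: "a < n" 
    have Psplit: "?P = {p. p permutes {0..<n} \<and> p a = a} \<union> (?P - {p. p a = a})" (is "_ = ?Pa \<union> ?Pz") by auto 
    {
      fix p
      assume p: "p permutes {0 ..< n}" "p a \<noteq> a"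
      hence "dpoly (Sum $$ (a, p a)) = 0" unfolding Sum_def lam_def mA_def using a p A
        by (auto simp: dpoly_const)
      hence "f p a = 0" unfolding f_def by auto
    } note 0 = this
    {
      fix p
      assume p: "p permutes {0 ..< n}" "p a = a"
      hence "dpoly (Sum $$ (a, p a)) = 1" unfolding Sum_def lam_def mA_def using a p A
        by (auto simp: dpoly_pCons)
      hence "f p a = g p a" unfolding f_def g_def by auto
    } note fg = this
    let ?n = "n - 1" 
    from a have n: "Suc ?n = n" by simp
    let ?B = "[:0, 1:] \<cdot>\<^sub>m 1\<^sub>m ?n + ?m (mat_delete A a a)" 
    have B: "?B \<in> carrier_mat ?n ?n" using A by auto
    have "sum (\<lambda> p. f p a) ?P = sum (\<lambda> p. f p a) ?Pa + sum (\<lambda> p. f p a) ?Pz" 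
      by (subst sum.union_disjoint[symmetric], auto simp: finite_permutations Psplit[symmetric])
    also have "\<dots> = sum (\<lambda> p. f p a) ?Pa" 
      by (subst (2) sum.neutral, insert 0, auto)
    also have "\<dots> = sum (\<lambda> p. g p a) ?Pa" 
      by (rule sum.cong, auto simp: fg)
    also have "\<dots> = ?det ?B"
      unfolding det_def'[OF B] 
      unfolding permutation_fix[of a ?n a, unfolded n, OF a a]
      unfolding sum.reindex[OF permutation_insert_inj_on[of a ?n a, unfolded n, OF a a]] o_def
    proof (rule sum.cong[OF refl])
      fix p
      let ?Q = "{p. p permutes {0..<?n}}" 
      assume "p \<in> ?Q"      
      hence p: "p permutes {0 ..< ?n}" by auto
      let ?p = "permutation_insert a a p"
      let ?i = "insert_index a" 
      have sign: "signof ?p = signof p" 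
        unfolding signof_permutation_insert[OF p, unfolded n, OF a a] by simp
      show "g (permutation_insert a a p) a = signof p * (\<Prod>i = 0..<?n. ?B $$ (i, p i))" 
        unfolding g_def sign
      proof (rule arg_cong[of _ _ "(*) (signof p)"])
        have "(\<Prod>i\<in>{0..<n} - {a}. Sum $$ (i, ?p i)) = 
           prod (($$) Sum) ((\<lambda>x. (x, ?p x)) ` ({0..<n} - {a}))"
          unfolding prod.reindex[OF inj_on_convol_ident, of _ ?p] o_def ..
        also have "\<dots> = (\<Prod> ii \<in> {(i', ?p i') |i'. i' \<in> {0..<n} - {a}}. Sum $$ ii)" 
          by (rule prod.cong, auto)
        also have "\<dots> = prod (($$) Sum) ((\<lambda> i. (?i i, ?i (p i))) ` {0 ..< ?n})" 
          unfolding Determinant.foo[of a ?n a, unfolded n, OF a a p]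
          by (rule arg_cong[of _ _ "prod _"], auto) 
        also have "\<dots> = prod (\<lambda> i. Sum $$ (?i i, ?i (p i))) {0 ..< ?n}"
        proof (subst prod.reindex, unfold o_def)
          show "inj_on (\<lambda>i. (?i i, ?i (p i))) {0..<?n}" using insert_index_inj_on[of a]
            by (auto simp: inj_on_def)
        qed simp
        also have "\<dots> = (\<Prod>i = 0..<?n. ?B $$ (i, p i))" 
        proof (rule prod.cong[OF refl], rename_tac i)
          fix j
          assume "j \<in> {0 ..< ?n}"
          hence j: "j < ?n" by auto
          with p have pj: "p j < ?n" by auto
          from j pj have jj: "?i j < n" "?i (p j) < n" by (auto simp: insert_index_def)
          let ?jj = "(?i j, ?i (p j))" 
          note index_adj = mat_delete_index[of _ ?n, unfolded n, OF _ a a j pj]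
          have "Sum $$ ?jj = lam $$ ?jj + mA $$ ?jj" unfolding Sum_def using jj A lam mA by auto
          also have "\<dots> = ?B $$ (j, p j)" 
            unfolding index_adj[OF mA] index_adj[OF lam] using j pj A
            by (simp add: mA_def lam_def mat_delete_def)
          finally show "Sum $$ ?jj = ?B $$ (j, p j)" .
        qed
        finally 
        show "(\<Prod>i\<in>{0..<n} - {a}. Sum $$ (i, ?p i)) = (\<Prod>i = 0..<?n. ?B $$ (i, p i))" .
      qed
    qed
    also have "\<dots> = char_poly (mat_delete A a a)" unfolding char_poly_def char_poly_matrix_def
      using A by simp
    also note calculation
  } note to_char_poly = this
  have "dpoly (char_poly A) = dpoly (?det Sum)" 
    unfolding char_poly_def char_poly_matrix_def id lam_def mA_def Sum_def by auto
  also have "\<dots> = sum (\<lambda> p. dpoly (signof p * ?e p)) ?P" unfolding det_def'[OF Sum]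
    dpoly_sum by (rule sum.cong, auto)
  also have "\<dots> = sum (\<lambda> p. (\<Sum>a = 0..<n. f p a)) ?P" 
    by (rule sum.cong[OF refl], subst to_f, auto)
  also have "\<dots> = (\<Sum>a = 0..<n. sum (\<lambda> p. f p a) ?P)" 
    by (rule sum.swap) 
  also have "\<dots> = (\<Sum>a <n. char_poly (mat_delete A a a))" 
    by (rule sum.cong, auto simp: to_char_poly)
  finally show ?thesis .
qed    


definition jtr :: "nat \<Rightarrow> 'a::comm_ring_1 mat \<Rightarrow> 'a" where
  "jtr n X = (\<Sum>i<n. X $$ (i, i))"

lemma mult_entry:
  assumes "X \<in> carrier_mat n n" "Y \<in> carrier_mat n n" "i < n" "j < n"
  shows "(X * Y) $$ (i, j) = (\<Sum>l<n. X $$ (i, l) * Y $$ (l, j))"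
  using assms by (simp add: scalar_prod_def atLeast0LessThan)

lemma pow_entry_Suc:
  assumes "C \<in> carrier_mat n n" "i < n" "j < n"
  shows "(C ^\<^sub>m Suc s) $$ (i, j) = (\<Sum>l<n. (C ^\<^sub>m s) $$ (i, l) * C $$ (l, j))"
  using mult_entry[OF pow_carrier_mat[OF assms(1)] assms(1) assms(2,3), of s] by simp

lemma coeff_mult_lin:
  "coeff (q * [:a, b:]) k = a * coeff q k + (if k = 0 then 0 else b * coeff q (k - 1))"
  by (cases k) (simp_all add: mult_pCons_right coeff_pCons algebra_simps)

lemma nat_down_induct:
  assumes "\<And>k. k \<ge> N \<Longrightarrow> P k" "\<And>k. P (Suc k) \<Longrightarrow> P k"
  shows "P (k::nat)"
proof -
  have "\<forall>k. N - k = d \<longrightarrow> P k" for d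
  proof (induct d)
    case 0 thus ?case using assms(1) by auto
  next
    case (Suc d) thus ?case using assms(2) by (metis Suc_diff_Suc diff_Suc_1 not_less_eq zero_less_Suc zero_less_diff)
  qed
  thus ?thesis by blast
qed

locale chm =
  fixes C :: "'a::comm_ring_1 mat" and n :: nat
  assumes C: "C \<in> carrier_mat n n"
begin

definition "M = char_poly_matrix C"
definition "Q = adj_mat M"
definition "c k = coeff (char_poly C) k"
definition "qc k i j = coeff (Q $$ (i, j)) k"
abbreviation "pw s \<equiv> C ^\<^sub>m s"

lemma dimC[simp]: "dim_row C = n" "dim_col C = n" using C by auto
lemma M: "M \<in> carrier_mat n n" using C by (simp add: M_def)
lemma Q: "Q \<in> carrier_mat n n" using adj_mat(1)[OF M] by (simp add: Q_def)
lemma pw: "pw s \<in> carrier_mat n n" using C by (simp add: pow_carrier_mat)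

lemma M_entry: "l < n \<Longrightarrow> j < n \<Longrightarrow> M $$ (l, j) = [:- C $$ (l, j), (if l = j then 1 else 0):]"
  using C by (auto simp: M_def char_poly_matrix_def)

lemma QM: "Q * M = char_poly C \<cdot>\<^sub>m 1\<^sub>m n"
  using adj_mat(3)[OF M] by (simp add: Q_def M_def char_poly_def)

lemma c_high: "m > n \<Longrightarrow> c m = 0"
  using degree_monic_char_poly[OF C] by (simp add: c_def coeff_eq_0)
lemma c_n: "c n = 1"
  using degree_monic_char_poly[OF C] by (simp add: c_def)

lemma eqn:
  assumes i: "i < n" and j: "j < n"
  shows "(\<Sum>l<n. - C $$ (l, j) * qc k i l + (if k = 0 then 0 else (if l = j then 1 else 0) * qc (k - 1) i l))
     = (if i = j then c k else 0)"
proof -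
  have "(if i = j then c k else 0) = coeff ((Q * M) $$ (i, j)) k"
    unfolding QM using i j by (simp add: c_def)
  also have "\<dots> = (\<Sum>l<n. coeff (Q $$ (i, l) * M $$ (l, j)) k)"
    by (simp add: mult_entry[OF Q M i j] coeff_sum)
  also have "\<dots> = (\<Sum>l<n. - C $$ (l, j) * qc k i l + (if k = 0 then 0 else (if l = j then 1 else 0) * qc (k - 1) i l))"
    by (rule sum.cong[OF refl]) (use j in \<open>simp add: M_entry coeff_mult_lin qc_def coeff_pCons split: nat.split\<close>)
  finally show ?thesis by simp
qed

lemma eqn0: "i < n \<Longrightarrow> j < n \<Longrightarrow> - (\<Sum>l<n. qc 0 i l * C $$ (l, j)) = (if i = j then c 0 else 0)"
  using eqn[of i j 0] by (simp add: sum_negf mult.commute)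

lemma eqnS: "i < n \<Longrightarrow> j < n \<Longrightarrow> qc k i j - (\<Sum>l<n. qc (Suc k) i l * C $$ (l, j)) = (if i = j then c (Suc k) else 0)"
proof -
  assume ij: "i < n" "j < n"
  have d: "(\<Sum>l<n. (if l = j then 1 else 0) * qc k i l) = qc k i j"
  proof -
    have "(\<Sum>l<n. (if l = j then 1 else 0) * qc k i l) = (\<Sum>l<n. if l = j then qc k i l else 0)"
      by (rule sum.cong) auto
    thus ?thesis using ij by simp
  qed
  have "(\<Sum>l<n. - C $$ (l, j) * qc (Suc k) i l + (if l = j then 1 else 0) * qc k i l)
      = - (\<Sum>l<n. qc (Suc k) i l * C $$ (l, j)) + (\<Sum>l<n. (if l = j then 1 else 0) * qc k i l)"
    by (simp add: sum.distrib sum_negf mult.commute sum_subtractf)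
  also have "\<dots> = qc k i j - (\<Sum>l<n. qc (Suc k) i l * C $$ (l, j))"
    unfolding d by simp
  finally show ?thesis using eqn[OF ij, of "Suc k"] by simp
qed

lemma vanish: "\<exists>N\<ge>n. \<forall>k\<ge>N. \<forall>i<n. \<forall>j<n. qc k i j = 0"
proof (intro exI conjI allI impI)
  let ?N = "n + (\<Sum>i<n. \<Sum>j<n. degree (Q $$ (i, j))) + 1"
  show "n \<le> ?N" by simp
  fix k i j assume k: "?N \<le> k" and i: "i < n" and j: "j < n"
  have "degree (Q $$ (i, j)) \<le> (\<Sum>j<n. degree (Q $$ (i, j)))"
    using j by (intro member_le_sum) auto
  also have "\<dots> \<le> (\<Sum>i<n. \<Sum>j<n. degree (Q $$ (i, j)))"
  proof -
    have "(\<lambda>i. \<Sum>j<n. degree (Q $$ (i, j))) i \<le> sum (\<lambda>i. \<Sum>j<n. degree (Q $$ (i, j))) {..<n}"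
      using i by (intro member_le_sum) auto
    thus ?thesis by simp
  qed
  finally show "qc k i j = 0" using k unfolding qc_def by (intro coeff_eq_0) linarith
qed

lemma G:
  assumes i: "i < n" and j: "j < n"
  shows "(\<Sum>l<n. (\<Sum>m\<in>{Suc k..n}. c m * pw (m - Suc k) $$ (i, l)) * C $$ (l, j))
       = (\<Sum>m\<in>{Suc k..n}. c m * pw (m - k) $$ (i, j))"
proof -
  have "(\<Sum>l<n. (\<Sum>m\<in>{Suc k..n}. c m * pw (m - Suc k) $$ (i, l)) * C $$ (l, j))
      = (\<Sum>l<n. \<Sum>m\<in>{Suc k..n}. c m * (pw (m - Suc k) $$ (i, l) * C $$ (l, j)))"
    by (simp add: sum_distrib_right mult.assoc)
  also have "\<dots> = (\<Sum>m\<in>{Suc k..n}. c m * (\<Sum>l<n. pw (m - Suc k) $$ (i, l) * C $$ (l, j)))"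
    by (subst sum.swap) (simp add: sum_distrib_left)
  also have "\<dots> = (\<Sum>m\<in>{Suc k..n}. c m * pw (m - k) $$ (i, j))"
  proof (rule sum.cong[OF refl])
    fix m assume "m \<in> {Suc k..n}"
    hence "m - k = Suc (m - Suc k)" by auto
    thus "c m * (\<Sum>l<n. pw (m - Suc k) $$ (i, l) * C $$ (l, j)) = c m * pw (m - k) $$ (i, j)"
      using pow_entry_Suc[OF C i j, of "m - Suc k"] by simp
  qed
  finally show ?thesis .
qed

lemma closed: "i < n \<Longrightarrow> j < n \<Longrightarrow> qc k i j = (\<Sum>m\<in>{Suc k..n}. c m * pw (m - Suc k) $$ (i, j))"
proof -
  obtain N where N: "N \<ge> n" "\<forall>k\<ge>N. \<forall>i<n. \<forall>j<n. qc k i j = 0" using vanish by blast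
  have "\<forall>i j. i < n \<longrightarrow> j < n \<longrightarrow> qc k i j = (\<Sum>m\<in>{Suc k..n}. c m * pw (m - Suc k) $$ (i, j))"
  proof (induct k rule: nat_down_induct[of N])
    case (1 k) thus ?case using N by auto
  next
    case (2 k)
    show ?case
    proof (intro allI impI)
      fix i j assume i: "i < n" and j: "j < n"
      have "(\<Sum>l<n. qc (Suc k) i l * C $$ (l, j))
          = (\<Sum>l<n. (\<Sum>m\<in>{Suc (Suc k)..n}. c m * pw (m - Suc (Suc k)) $$ (i, l)) * C $$ (l, j))"
        by (rule sum.cong[OF refl]) (use 2 i in auto)
      also have "\<dots> = (\<Sum>m\<in>{Suc (Suc k)..n}. c m * pw (m - Suc k) $$ (i, j))"
        by (rule G[OF i j])
      finally have e: "qc k i j = (\<Sum>m\<in>{Suc (Suc k)..n}. c m * pw (m - Suc k) $$ (i, j))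
          + (if i = j then c (Suc k) else 0)"
        using eqnS[OF i j, of k] by (simp add: algebra_simps)
      show "qc k i j = (\<Sum>m\<in>{Suc k..n}. c m * pw (m - Suc k) $$ (i, j))"
      proof (cases "Suc k \<le> n")
        case True
        hence "{Suc k..n} = insert (Suc k) {Suc (Suc k)..n}" by auto
        thus ?thesis using e i j by (simp add: add.commute)
      next
        case False
        thus ?thesis using e c_high[of "Suc k"] by simp
      qed
    qed
  qed
  thus "i < n \<Longrightarrow> j < n \<Longrightarrow> ?thesis" by blast
qed

lemma cayley: assumes i: "i < n" and j: "j < n"
  shows "c 0 * (if i = j then 1 else 0) + (\<Sum>m\<in>{1..n}. c m * pw m $$ (i, j)) = 0"
proof -
  have "(\<Sum>l<n. qc 0 i l * C $$ (l, j)) = (\<Sum>l<n. (\<Sum>m\<in>{Suc 0..n}. c m * pw (m - Suc 0) $$ (i, l)) * C $$ (l, j))"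
    by (rule sum.cong[OF refl]) (use i closed in auto)
  also have "\<dots> = (\<Sum>m\<in>{1..n}. c m * pw m $$ (i, j))" using G[OF i j, of 0] by simp
  finally have h: "- (\<Sum>m\<in>{1..n}. c m * pw m $$ (i, j)) = (if i = j then c 0 else 0)"
    using eqn0[OF i j] by simp
  show ?thesis
  proof (cases "i = j")
    case True thus ?thesis using h by (simp add: neg_eq_iff_add_eq_0 add.commute)
  next
    case False thus ?thesis using h by simp
  qed
qed

lemma delete_M: assumes i: "i < n"
  shows "mat_delete M i i = char_poly_matrix (mat_delete C i i)"
proof (rule eq_matI)
  fix a b assume a: "a < dim_row (char_poly_matrix (mat_delete C i i))"
    and b: "b < dim_col (char_poly_matrix (mat_delete C i i))"
  have a': "a < n - 1" and b': "b < n - 1" using a b by (simp_all add: char_poly_matrix_def)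
  define a2 where "a2 = (if a < i then a else Suc a)"
  define b2 where "b2 = (if b < i then b else Suc b)"
  have a2: "a2 < n" and b2: "b2 < n" using a' b' by (auto simp: a2_def b2_def)
  have ab: "(a2 = b2) = (a = b)" by (auto simp: a2_def b2_def)
  have "mat_delete M i i $$ (a, b) = M $$ (a2, b2)"
    using a' b' M by (simp add: mat_delete_def a2_def b2_def)
  also have "\<dots> = (if a2 = b2 then [:0, 1:] else 0) + [:- C $$ (a2, b2):]"
    using a2 b2 by (simp add: M_def char_poly_matrix_def)
  also have "\<dots> = char_poly_matrix (mat_delete C i i) $$ (a, b)"
    using a' b' unfolding ab by (simp add: char_poly_matrix_def mat_delete_def a2_def b2_def)
  finally show "mat_delete M i i $$ (a, b) = char_poly_matrix (mat_delete C i i) $$ (a, b)" .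
qed (use M in \<open>simp_all add: char_poly_matrix_def\<close>)

lemma Q_diag: "i < n \<Longrightarrow> Q $$ (i, i) = char_poly (mat_delete C i i)"
proof -
  assume i: "i < n"
  have "Q $$ (i, i) = cofactor M i i" using M i by (simp add: Q_def adj_mat_def)
  also have "\<dots> = det (mat_delete M i i)" by (simp add: cofactor_def)
  finally show ?thesis by (simp add: char_poly_def delete_M[OF i])
qed

lemma trace_qc: "(\<Sum>i<n. qc k i i) = of_nat (Suc k) * c (Suc k)"
proof -
  have "(\<Sum>i<n. qc k i i) = coeff (\<Sum>i<n. char_poly (mat_delete C i i)) k"
    by (simp add: coeff_sum qc_def Q_diag)
  also have "\<dots> = coeff (dpoly (char_poly C)) k" by (simp add: dpoly_char_poly[OF C])
  finally show ?thesis by (simp add: coeff_dpoly c_def)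
qed

lemma jtr_one: "jtr n (1\<^sub>m n :: 'a mat) = of_nat n"
  by (simp add: jtr_def)
lemma jtr_pw0: "jtr n (pw 0) = of_nat n"
  by (simp add: jtr_def)

lemma newton: assumes k: "k < n"
  shows "of_nat (n - k) * c k = - (\<Sum>i\<in>{1..n - k}. c (k + i) * jtr n (pw i))"
proof (cases k)
  case 0
  have "0 = (\<Sum>i<n. c 0 + (\<Sum>m\<in>{1..n}. c m * pw m $$ (i, i)))"
  proof (rule sym, rule sum.neutral, rule ballI)
    fix i assume "i \<in> {..<n}"
    thus "c 0 + (\<Sum>m\<in>{1..n}. c m * pw m $$ (i, i)) = 0" using cayley[of i i] by simp
  qed
  also have "\<dots> = (\<Sum>i<n. c 0) + (\<Sum>i<n. \<Sum>m\<in>{1..n}. c m * pw m $$ (i, i))"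
    by (rule sum.distrib)
  also have "(\<Sum>i<n. \<Sum>m\<in>{1..n}. c m * pw m $$ (i, i)) = (\<Sum>m\<in>{1..n}. \<Sum>i<n. c m * pw m $$ (i, i))"
    by (rule sum.swap)
  also have "\<dots> = (\<Sum>m\<in>{1..n}. c m * jtr n (pw m))"
    by (simp add: jtr_def sum_distrib_left)
  finally have "of_nat n * c 0 + (\<Sum>m\<in>{1..n}. c m * jtr n (pw m)) = 0" by simp
  thus ?thesis using 0 by (simp add: eq_neg_iff_add_eq_0)
next
  case (Suc k0)
  have "(\<Sum>i<n. qc k0 i i) = (\<Sum>i<n. \<Sum>m\<in>{k..n}. c m * pw (m - k) $$ (i, i))"
    by (rule sum.cong[OF refl]) (simp add: closed Suc)
  also have "\<dots> = (\<Sum>m\<in>{k..n}. c m * jtr n (pw (m - k)))"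
    by (subst sum.swap) (simp add: jtr_def sum_distrib_left)
  also have "{k..n} = insert k {Suc k..n}" using k by auto
  also have "(\<Sum>m\<in>insert k {Suc k..n}. c m * jtr n (pw (m - k)))
      = c k * of_nat n + (\<Sum>m\<in>{Suc k..n}. c m * jtr n (pw (m - k)))" by (simp add: jtr_one)
  also have "(\<Sum>m\<in>{Suc k..n}. c m * jtr n (pw (m - k))) = (\<Sum>i\<in>{1..n - k}. c (k + i) * jtr n (pw i))"
    by (rule sum.reindex_bij_witness[where i = "\<lambda>i. k + i" and j = "\<lambda>m. m - k"]) (simp_all, linarith+)
  finally have h: "of_nat k * c k = c k * of_nat n + (\<Sum>i\<in>{1..n - k}. c (k + i) * jtr n (pw i))"
    using trace_qc[of k0] Suc by simp
  have nk: "k + (n - k) = n" using k by simp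
  have e: "(of_nat n :: 'a) = of_nat k + of_nat (n - k)" by (metis nk of_nat_add)
  define S where "S = (\<Sum>i\<in>{1..n - k}. c (k + i) * jtr n (pw i))"
  have "of_nat k * c k = c k * (of_nat k + of_nat (n - k)) + S" using h unfolding e S_def .
  also have "\<dots> = of_nat k * c k + (of_nat (n - k) * c k + S)"
    by (simp only: distrib_left mult.commute[of "c k"] add.assoc)
  finally have X: "of_nat k * c k = of_nat k * c k + (of_nat (n - k) * c k + S)" .
  from X have "of_nat (n - k) * c k + S = 0" by simp
  thus ?thesis unfolding S_def by (simp add: eq_neg_iff_add_eq_0)
qed

end


lemma fun_sum_apply: "(\<Sum>t\<in>T. f t) x = (\<Sum>t\<in>T. f t x)"
proof (induct T rule: infinite_finite_induct)
  case (infinite A) thus ?case by (metis sum.infinite zero_fun_apply)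
next
  case empty thus ?case by (metis sum.empty zero_fun_apply)
next
  case (insert y F) thus ?case by (simp only: sum.insert[OF insert(1,2)] plus_fun_apply insert(3))
qed

lemma dr_sum: "dr (\<Sum>t\<in>T. f t) = (\<Sum>t\<in>T. dr (f t))"
proof (induct T rule: infinite_finite_induct)
  case (infinite A) thus ?case by (metis sum.infinite dr_zero)
next
  case empty thus ?case by (metis sum.empty dr_zero)
next
  case (insert y F) thus ?case by (simp only: sum.insert[OF insert(1,2)] dr_add insert(3))
qed

lemma dm_sum: "dm (\<Sum>t\<in>T. f t) = (\<Sum>t\<in>T. dm (f t))"
proof (induct T rule: infinite_finite_induct)
  case (infinite A) thus ?case by (metis sum.infinite dm_zero)
next
  case empty thus ?case by (metis sum.empty dm_zero)
next
  case (insert y F) thus ?case by (simp only: sum.insert[OF insert(1,2)] dm_add insert(3))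
qed

lemma dr_of_nat: "dr (of_nat m :: 'k::comm_ring_1 dn) = gscale (of_nat m) gone"
  and dm_of_nat: "dm (of_nat m :: 'k::comm_ring_1 dn) = 0"
proof (induct m)
  case 0
  { case 1 show ?case by (rule ext) (simp add: gscale_def) }
  { case 2 show ?case by simp }
next
  case (Suc m)
  { case 1 show ?case using Suc(1) by (simp add: gscale_def fun_eq_iff algebra_simps) }
  { case 2 show ?case using Suc(2) by simp }
qed

lemma dr_of_int: "dr (of_int z :: 'k::comm_ring_1 dn) = gscale (of_int z) gone"
  and dm_of_int: "dm (of_int z :: 'k::comm_ring_1 dn) = 0"
proof -
  have "dr (of_int z :: 'k dn) = gscale (of_int z) gone \<and> dm (of_int z :: 'k dn) = 0"
  proof (cases z rule: int_cases)
    case (nonneg m) thus ?thesis using dr_of_nat[of m] dm_of_nat[of m] by simp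
  next
    case (neg m)
    have h1: "dr (of_nat (Suc m) :: 'k dn) = gscale (of_nat (Suc m)) gone" by (rule dr_of_nat)
    have h2: "dm (of_nat (Suc m) :: 'k dn) = 0" by (rule dm_of_nat)
    have e: "(of_int z :: 'k dn) = - of_nat (Suc m)" using neg by simp
    have "gscale (of_int z) gone = - gscale (of_nat (Suc m)) (gone :: 'k grass)"
      by (rule ext) (simp add: gscale_def neg algebra_simps)
    thus ?thesis unfolding e by (simp only: dr_uminus dm_uminus h1 h2) simp
  qed
  thus "dr (of_int z :: 'k dn) = gscale (of_int z) gone" "dm (of_int z :: 'k dn) = 0" by auto
qed

lemma gmul_gscale_gone: "gfin f \<Longrightarrow> gmul (gscale c gone) f = gscale c f"
  by (simp add: gmul_gscale_left gmul_gone_left)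

lemma dr_of_int_mult: "dr (of_int z * x :: 'k::comm_ring_1 dn) = gscale (of_int z) (dr x)"
  by (simp add: dr_of_int gmul_gscale_gone dr_gfin)

lemma gfin_mmul: "gfin (mmul n X Y i j)"
  unfolding mmul_def by (rule gfin_sum) (simp add: gfin_gmul)

lemma mmul_assoc: "mmul n (mmul n X Y) Z = mmul n X (mmul n Y (Z :: 'k::comm_ring_1 gmat))"
proof (rule ext, rule ext)
  fix i j
  have "mmul n (mmul n X Y) Z i j = (\<Sum>l<n. \<Sum>m<n. gmul (gmul (X i m) (Y m l)) (Z l j))"
    by (simp add: mmul_def gmul_sum_left)
  also have "\<dots> = (\<Sum>m<n. \<Sum>l<n. gmul (X i m) (gmul (Y m l) (Z l j)))"
    by (subst sum.swap) (simp add: gmul_assoc)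
  also have "\<dots> = mmul n X (mmul n Y Z) i j"
    by (simp add: mmul_def gmul_sum_right)
  finally show "mmul n (mmul n X Y) Z i j = mmul n X (mmul n Y Z) i j" .
qed

lemma mmul_mone_right: "j < n \<Longrightarrow> gfin (X i j) \<Longrightarrow> mmul n X mone i j = (X i j :: 'k::comm_ring_1 grass)"
proof -
  assume j: "j < n" and g: "gfin (X i j)"
  have "mmul n X mone i j = (\<Sum>l<n. if l = j then gmul (X i l) gone else 0)"
    unfolding mmul_def by (rule sum.cong) (auto simp: mone_def)
  also have "\<dots> = gmul (X i j) gone" using j by simp
  finally show ?thesis using g by (simp add: gmul_gone_right)
qed

lemma mmul_sum_left: "mmul n (\<Sum>t\<in>T. Z t) Y = (\<Sum>t\<in>T. mmul n (Z t) (Y :: 'k::comm_ring_1 gmat))"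
  by (rule ext, rule ext) (simp add: mmul_def fun_sum_apply gmul_sum_left sum.swap[of _ T])

definition fc :: "'k::comm_ring_1 dn poly \<Rightarrow> 'k gpoly" where
  "fc q = (\<lambda>k. dr (coeff q k))"

lemma fc_mult: "fc (p * q) = pmul (fc p) (fc q)"
  by (rule ext) (simp add: fc_def pmul_def coeff_mult dr_sum)

lemma fc_one: "fc (1 :: 'k::comm_ring_1 dn poly) = pone"
  by (rule ext) (simp add: fc_def pone_def)

lemma fc_prod_list: "fc (prod_list (map f xs)) = foldr (\<lambda>i acc. pmul (fc (f i)) acc) xs pone"
  by (induct xs) (simp_all add: fc_one fc_mult)

lemma coeff_of_int_mult: "coeff (of_int z * q) k = of_int z * coeff q k"
  by (simp add: of_int_poly)

locale br =
  fixes n :: nat and A B :: "'k::comm_ring_1 gmat"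
  assumes Aev: "\<And>i j. i < n \<Longrightarrow> j < n \<Longrightarrow> evn (A i j)"
    and Bfin: "\<And>i j. i < n \<Longrightarrow> j < n \<Longrightarrow> gfin (B i j)"
begin

definition C :: "'k dn mat" where "C = mat n n (\<lambda>(i, j). mkdn (A i j) (B i j))"

lemma Ccar: "C \<in> carrier_mat n n" by (simp add: C_def)
lemma C_dr: "i < n \<Longrightarrow> j < n \<Longrightarrow> dr (C $$ (i, j)) = A i j"
  and C_dm: "i < n \<Longrightarrow> j < n \<Longrightarrow> dm (C $$ (i, j)) = B i j"
  by (simp_all add: C_def Aev Bfin)

sublocale chm C n by unfold_locales (rule Ccar)

definition Ds :: "nat \<Rightarrow> 'k gmat" where
  "Ds s = (\<Sum>t<s. mmul n (mmul n (mpow n A (s - 1 - t)) B) (mpow n A t))"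

lemma Ds_apply: "Ds s i j = (\<Sum>t<s. mmul n (mmul n (mpow n A (s - 1 - t)) B) (mpow n A t) i j)"
  by (simp add: Ds_def fun_sum_apply)

lemma pw_bridge: "i < n \<Longrightarrow> j < n \<Longrightarrow> dr (pw s $$ (i, j)) = mpow n A s i j \<and> dm (pw s $$ (i, j)) = Ds s i j"
proof (induct s arbitrary: i j)
  case 0
  thus ?case by (simp add: mone_def Ds_def zero_fun_def)
next
  case (Suc s)
  note ij = Suc.prems
  have e: "pw (Suc s) $$ (i, j) = (\<Sum>l<n. pw s $$ (i, l) * C $$ (l, j))"
    by (rule pow_entry_Suc[OF Ccar ij])
  have "dr (pw (Suc s) $$ (i, j)) = (\<Sum>l<n. gmul (mpow n A s i l) (A l j))"
    unfolding e dr_sum by (rule sum.cong[OF refl]) (use Suc.hyps ij in \<open>simp add: C_dr\<close>)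
  also have "\<dots> = mpow n A (Suc s) i j" by (simp add: mmul_def)
  finally have r: "dr (pw (Suc s) $$ (i, j)) = mpow n A (Suc s) i j" .
  have "dm (pw (Suc s) $$ (i, j)) = (\<Sum>l<n. gmul (mpow n A s i l) (B l j) + gmul (Ds s i l) (A l j))"
    unfolding e dm_sum
  proof (rule sum.cong[OF refl])
    fix l assume "l \<in> {..<n}"
    hence l: "l < n" by simp
    have "gmul (A l j) (Ds s i l) = gmul (Ds s i l) (A l j)"
      by (rule gmul_comm_even[OF Aev[OF l ij(2)]])
    thus "dm (pw s $$ (i, l) * C $$ (l, j)) = gmul (mpow n A s i l) (B l j) + gmul (Ds s i l) (A l j)"
      using Suc.hyps[OF ij(1) l] by (simp add: C_dr C_dm l ij)
  qed
  also have "\<dots> = mmul n (mpow n A s) B i j + mmul n (Ds s) A i j"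
    by (simp add: mmul_def sum.distrib)
  also have "\<dots> = Ds (Suc s) i j"
  proof -
    have "Ds (Suc s) i j = mmul n (mmul n (mpow n A s) B) mone i j
        + (\<Sum>t<s. mmul n (mmul n (mpow n A (s - Suc t)) B) (mpow n A (Suc t)) i j)"
      unfolding Ds_apply by (subst sum.lessThan_Suc_shift) simp
    also have "mmul n (mmul n (mpow n A s) B) mone i j = mmul n (mpow n A s) B i j"
      by (rule mmul_mone_right[OF ij(2) gfin_mmul])
    also have "(\<Sum>t<s. mmul n (mmul n (mpow n A (s - Suc t)) B) (mpow n A (Suc t)) i j)
        = (\<Sum>t<s. mmul n (mmul n (mmul n (mpow n A (s - 1 - t)) B) (mpow n A t)) A) i j"
      by (simp add: fun_sum_apply mmul_assoc)
    also have "\<dots> = mmul n (Ds s) A i j"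
      by (simp add: Ds_def mmul_sum_left)
    finally show ?thesis by (rule sym)
  qed
  finally show ?case using r by simp
qed


lemma jtr_bridge: "dr (jtr n (pw s)) = mtrace n (mpow n A s)"
  and jtr_bridge_dm: "dm (jtr n (pw s)) = (\<Sum>t<s. mtrace n (mmul n (mmul n (mpow n A (s - 1 - t)) B) (mpow n A t)))"
proof -
  show "dr (jtr n (pw s)) = mtrace n (mpow n A s)"
    unfolding jtr_def mtrace_def dr_sum by (rule sum.cong) (simp_all add: pw_bridge)
  have "dm (jtr n (pw s)) = (\<Sum>i<n. Ds s i i)"
    unfolding jtr_def dm_sum by (rule sum.cong) (simp_all add: pw_bridge)
  also have "\<dots> = (\<Sum>t<s. mtrace n (mmul n (mmul n (mpow n A (s - 1 - t)) B) (mpow n A t)))"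
    unfolding Ds_apply mtrace_def by (rule sum.swap)
  finally show "dm (jtr n (pw s)) = (\<Sum>t<s. mtrace n (mmul n (mmul n (mpow n A (s - 1 - t)) B) (mpow n A t)))" .
qed

lemma fc_M: "i < n \<Longrightarrow> j < n \<Longrightarrow> fc (M $$ (i, j)) = xIminus A i j"
  by (rule ext) (simp add: fc_def M_entry xIminus_def coeff_pCons C_dr split: nat.split)

lemma c_bridge: "dr (c k) = charpoly n A k"
proof -
  have "char_poly C = (\<Sum>p\<in>{p. p permutes {0..<n}}. signof p * (\<Prod>i = 0..<n. M $$ (i, p i)))"
    unfolding char_poly_def M_def[symmetric] by (rule det_def'[OF M])
  hence "dr (c k) = (\<Sum>p\<in>{p. p permutes {0..<n}}. gscale (of_int (sign p)) (fc (\<Prod>i = 0..<n. M $$ (i, p i)) k))"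
    by (simp add: c_def coeff_sum dr_sum coeff_of_int_mult dr_of_int gmul_gscale_left gmul_gone_left dr_gfin fc_def)
  also have "\<dots> = (\<Sum>p\<in>{p. p permutes {0..<n}}. gscale (of_int (sign p))
      (foldr (\<lambda>i acc. pmul (xIminus A i (p i)) acc) [0..<n] pone k))"
  proof (rule sum.cong[OF refl])
    fix p assume "p \<in> {p. p permutes {0..<n}}"
    hence p: "p permutes {0..<n}" by simp
    have "(\<Prod>i = 0..<n. M $$ (i, p i)) = prod_list (map (\<lambda>i. M $$ (i, p i)) [0..<n])"
      using prod.distinct_set_conv_list[of "[0..<n]" "\<lambda>i. M $$ (i, p i)"] by simp
    hence "fc (\<Prod>i = 0..<n. M $$ (i, p i)) = foldr (\<lambda>i acc. pmul (fc (M $$ (i, p i))) acc) [0..<n] pone"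
      by (simp add: fc_prod_list)
    also have "\<dots> = foldr (\<lambda>i acc. pmul (xIminus A i (p i)) acc) [0..<n] pone"
    proof (rule foldr_cong[OF refl refl])
      fix i acc assume "i \<in> set [0..<n]"
      hence i: "i < n" by simp
      hence "p i < n" using p by (simp add: permutes_in_image[OF p])
      thus "pmul (fc (M $$ (i, p i))) acc = pmul (xIminus A i (p i)) acc" using i by (simp add: fc_M)
    qed
    finally show "gscale (of_int (sign p)) (fc (\<Prod>i = 0..<n. M $$ (i, p i)) k)
        = gscale (of_int (sign p)) (foldr (\<lambda>i acc. pmul (xIminus A i (p i)) acc) [0..<n] pone k)" by simp
  qed
  also have "\<dots> = charpoly n A k"
    by (simp add: charpoly_def fun_sum_apply atLeast0LessThan)
  finally show ?thesis .
qed


lemma dm_of_nat_mult: "dm (of_nat m * x) = gscale (of_nat m) (dm (x :: 'k dn))"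
  by (simp add: dr_of_nat dm_of_nat gmul_gscale_gone dm_gfin)

lemma newton_dm: assumes k: "k < n"
  shows "gscale (of_nat (n - k)) (dm (c k)) = - (\<Sum>i\<in>{1..n - k}.
      gmul (charpoly n A (k + i)) (\<Sum>t<i. mtrace n (mmul n (mmul n (mpow n A (i - 1 - t)) B) (mpow n A t)))
      + gmul (dm (c (k + i))) (mtrace n (mpow n A i)))"
proof -
  have "gscale (of_nat (n - k)) (dm (c k)) = dm (of_nat (n - k) * c k)" by (rule dm_of_nat_mult[symmetric])
  also have "\<dots> = dm (- (\<Sum>i\<in>{1..n - k}. c (k + i) * jtr n (pw i)))" by (simp add: newton[OF k])
  also have "\<dots> = - (\<Sum>i\<in>{1..n - k}. dm (c (k + i) * jtr n (pw i)))" by (simp add: dm_sum)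
  also have "(\<Sum>i\<in>{1..n - k}. dm (c (k + i) * jtr n (pw i))) = (\<Sum>i\<in>{1..n - k}.
      gmul (charpoly n A (k + i)) (\<Sum>t<i. mtrace n (mmul n (mmul n (mpow n A (i - 1 - t)) B) (mpow n A t)))
      + gmul (dm (c (k + i))) (mtrace n (mpow n A i)))"
  proof (rule sum.cong[OF refl])
    fix i
    have "gmul (dr (jtr n (pw i))) (dm (c (k + i))) = gmul (dm (c (k + i))) (dr (jtr n (pw i)))"
      by (rule gmul_comm_even[OF dr_evn])
    thus "dm (c (k + i) * jtr n (pw i)) = gmul (charpoly n A (k + i)) (\<Sum>t<i. mtrace n (mmul n (mmul n (mpow n A (i - 1 - t)) B) (mpow n A t)))
      + gmul (dm (c (k + i))) (mtrace n (mpow n A i))"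
      by (simp only: dm_mult c_bridge jtr_bridge jtr_bridge_dm)
  qed
  finally show ?thesis .
qed

lemma cayley_dm: assumes i: "i < n" and j: "j < n"
  shows "gmul (dm (c 0)) (mone i j) + (\<Sum>m\<in>{1..n}. gmul (dm (c m)) (mpow n A m i j) + gmul (charpoly n A m) (Ds m i j)) = 0"
proof -
  define d :: "'k dn" where "d = (if i = j then 1 else 0)"
  have dd: "dr d = mone i j" "dm d = 0" by (simp_all add: d_def mone_def)
  have "0 = dm (c 0 * d + (\<Sum>m\<in>{1..n}. c m * pw m $$ (i, j)))"
    using cayley[OF i j] by (simp add: d_def)
  also have "\<dots> = gmul (dm (c 0)) (mone i j) + (\<Sum>m\<in>{1..n}. gmul (dm (c m)) (mpow n A m i j) + gmul (charpoly n A m) (Ds m i j))"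
  proof -
    have e1: "dm (c 0 * d) = gmul (dm (c 0)) (mone i j)"
      using gmul_comm_even[OF dr_evn[of d], of "dm (c 0)"] by (simp add: dd)
    have e2: "dm (c m * pw m $$ (i, j)) = gmul (dm (c m)) (mpow n A m i j) + gmul (charpoly n A m) (Ds m i j)" for m
    proof -
      have "gmul (dr (pw m $$ (i, j))) (dm (c m)) = gmul (dm (c m)) (dr (pw m $$ (i, j)))"
        by (rule gmul_comm_even[OF dr_evn])
      thus ?thesis using pw_bridge[OF i j, of m] by (simp only: dm_mult c_bridge add.commute)
    qed
    show ?thesis by (simp only: dm_add dm_sum e1 e2)
  qed
  finally show ?thesis by simp
qed

end

lemma reindex_pairs:
  fixes f :: "nat \<Rightarrow> 'k::comm_ring_1 grass" and T :: "nat \<Rightarrow> nat \<Rightarrow> 'k grass"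
  assumes N: "N \<ge> 1"
  shows "(\<Sum>i\<in>{1..N}. gmul (f (k + i)) (\<Sum>t<i. T (i - 1 - t) t))
    = (\<Sum>(r, s)\<in>{(r, s). r + s \<le> N - 1}. gmul (f (k + r + s + 1)) (T r s))"
proof -
  have "(\<Sum>i\<in>{1..N}. gmul (f (k + i)) (\<Sum>t<i. T (i - 1 - t) t))
      = (\<Sum>i\<in>{1..N}. \<Sum>t<i. gmul (f (k + i)) (T (i - 1 - t) t))"
    by (simp add: gmul_sum_right)
  also have "\<dots> = (\<Sum>(i, t)\<in>(SIGMA i:{1..N}. {..<i}). gmul (f (k + i)) (T (i - 1 - t) t))"
    by (rule sum.Sigma) auto
  also have "\<dots> = (\<Sum>(r, s)\<in>{(r, s). r + s \<le> N - 1}. gmul (f (k + r + s + 1)) (T r s))"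
    by (rule sum.reindex_bij_witness[where i = "\<lambda>(r, s). (r + s + 1, s)" and j = "\<lambda>(i, t). (i - 1 - t, t)"])
      (use N in \<open>auto simp: add.assoc\<close>)
  finally show ?thesis .
qed


theorem theorem2p1:
  fixes n :: nat
    and A B :: "'k::field_char_0 gmat"
    and beta :: "nat \<Rightarrow> 'k grass"
  assumes n: "n \<ge> 1"
    and A: "\<forall>i<n. \<forall>j<n. A i j \<in> Grass0"
    and B: "\<forall>i<n. \<forall>j<n. B i j \<in> Grass1"
    and beta_n: "beta n = 0"
    and beta_rec: "\<forall>k<n. beta k =
        gscale (- 1 / of_nat (n - k))
          (\<Sum>i\<in>{1..n - k}. gmul (beta (k + i)) (mtrace n (mpow n A i)))
      + gscale (- 1 / of_nat (n - k))
          (\<Sum>(r, s)\<in>{(r, s). r + s \<le> n - k - 1}.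
             gmul (charpoly n A (k + r + s + 1)) (mtrace n (mmul n (mmul n (mpow n A r) B) (mpow n A s))))"
  shows "\<forall>i<n. \<forall>j<n.
    (msmul (beta 0) mone
     + (\<Sum>k\<in>{1..n}. msmul (beta k) (mpow n A k)
          + msmul (charpoly n A k)
              (\<Sum>t<k. mmul n (mmul n (mpow n A (k - 1 - t)) B) (mpow n A t)))) i j = 0"
proof -
  have Aev: "\<And>i j. i < n \<Longrightarrow> j < n \<Longrightarrow> evn (A i j)"
    using A by (auto simp: Grass0_def Grass_def evn_def)
  have Bfin: "\<And>i j. i < n \<Longrightarrow> j < n \<Longrightarrow> gfin (B i j)"
    using B by (auto simp: Grass1_def Grass_def gfin_def)
  interpret br n A B by unfold_locales (simp_all add: Aev Bfin)
  have bc: "beta k = dm (c k)" if "k \<le> n" for k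
    using that
  proof (induct "n - k" arbitrary: k rule: less_induct)
    case (less k)
    show ?case
    proof (cases "k = n")
      case True thus ?thesis using beta_n c_n by simp
    next
      case False
      with less.prems have k: "k < n" by simp
      define m where "m = n - k"
      have m1: "m \<ge> 1" using k by (simp add: m_def)
      have IH: "beta (k + i) = dm (c (k + i))" if "i \<in> {1..n - k}" for i
        using that by (intro less.hyps) auto
      define P where "P = (\<Sum>(r, s)\<in>{(r, s). r + s \<le> n - k - 1}.
             gmul (charpoly n A (k + r + s + 1)) (mtrace n (mmul n (mmul n (mpow n A r) B) (mpow n A s))))"
      define Q where "Q = (\<Sum>i\<in>{1..n - k}. gmul (beta (k + i)) (mtrace n (mpow n A i)))"
      have R: "beta k = gscale (- 1 / of_nat m) Q + gscale (- 1 / of_nat m) P"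
        using beta_rec k unfolding P_def Q_def m_def by blast
      have "gscale (of_nat m) (dm (c k)) = - (\<Sum>i\<in>{1..n - k}.
          gmul (charpoly n A (k + i)) (\<Sum>t<i. mtrace n (mmul n (mmul n (mpow n A (i - 1 - t)) B) (mpow n A t)))
          + gmul (dm (c (k + i))) (mtrace n (mpow n A i)))"
        unfolding m_def by (rule newton_dm[OF k])
      also have "\<dots> = - (P + Q)"
      proof -
        have "(\<Sum>i\<in>{1..n - k}. gmul (charpoly n A (k + i)) (\<Sum>t<i. mtrace n (mmul n (mmul n (mpow n A (i - 1 - t)) B) (mpow n A t)))) = P"
          unfolding P_def by (rule reindex_pairs) (use k in simp)
        moreover have "(\<Sum>i\<in>{1..n - k}. gmul (dm (c (k + i))) (mtrace n (mpow n A i))) = Q"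
          unfolding Q_def by (rule sum.cong[OF refl]) (simp add: IH)
        ultimately show ?thesis by (simp only: sum.distrib)
      qed
      finally have N: "gscale (of_nat m) (dm (c k)) = - (P + Q)" .
      have mnz: "(of_nat m :: 'k) \<noteq> 0" using m1 by simp
      show ?thesis
      proof (rule ext)
        fix S
        have "of_nat m * dm (c k) S = - (P S + Q S)"
          using fun_cong[OF N, of S] by (simp add: gscale_def)
        hence "dm (c k) S = (- 1 / of_nat m) * (P S + Q S)"
          using mnz by (simp add: field_simps)
        thus "beta k S = dm (c k) S" unfolding R by (simp add: gscale_def algebra_simps)
      qed
    qed
  qed
  show ?thesis
  proof (intro allI impI)
    fix i j assume i: "i < n" and j: "j < n"
    have pa: "(F + G) i j = F i j + (G i j :: 'k grass)" for F G :: "'k gmat" by simp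
    have sa: "(\<Sum>k\<in>K. f k) i j = (\<Sum>k\<in>K. f k i j :: 'k grass)" for K and f :: "nat \<Rightarrow> 'k gmat"
      by (simp only: fun_sum_apply)
    have "(msmul (beta 0) mone
     + (\<Sum>k\<in>{1..n}. msmul (beta k) (mpow n A k)
          + msmul (charpoly n A k)
              (\<Sum>t<k. mmul n (mmul n (mpow n A (k - 1 - t)) B) (mpow n A t)))) i j
      = gmul (dm (c 0)) (mone i j) + (\<Sum>m\<in>{1..n}. gmul (dm (c m)) (mpow n A m i j) + gmul (charpoly n A m) (Ds m i j))"
      unfolding Ds_def[symmetric] pa sa msmul_def
      by (intro arg_cong2[where f = "(+)"] sum.cong refl) (simp_all add: bc)
    also have "\<dots> = 0" by (rule cayley_dm[OF i j])
    finally show "(msmul (beta 0) mone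
     + (\<Sum>k\<in>{1..n}. msmul (beta k) (mpow n A k)
          + msmul (charpoly n A k)
              (\<Sum>t<k. mmul n (mmul n (mpow n A (k - 1 - t)) B) (mpow n A t)))) i j = 0" .
  qed
qed


end
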